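(* Let $N\ge2$, $M\ge2$, $d\ge2$. Let $W$ be a random variable with distribution $p(w)$ and let the measurement settings $\boldsymbol{x}\in\{1,\dots,M\}^N$ be chosen with conditional probabilities $p(\boldsymbol{x}|w)$, such that the resulting probabilities $p(\boldsymbol{x})=\sum_w p(w)p(\boldsymbol{x}|w)$ are all equal. Suppose that for each $w$ the outcomes $\boldsymbol{a}\in\mathbb{Z}_d^N$ follow a nonsignalling distribution $\{p(\boldsymbol{a}|\boldsymbol{x},w)\}_{\boldsymbol{a},\boldsymbol{x}}$. Let $p(w|\boldsymbol{x})=p(\boldsymbol{x}|w)p(w)/p(\boldsymbol{x})$, the observed distribution $p(\boldsymbol{a}|\boldsymbol{x})=\sum_wp(w|\boldsymbol{x})p(\boldsymbol{a}|\boldsymbol{x},w)$, and $p(a_k,w|\boldsymbol{x})=p(w|\boldsymbol{x})p(a_k|\boldsymbol{x},w)$ with $p(a_k|\boldsymbol{x},w)$ the marginal of party $k$. Then for every $k=1,\dots,N$ and every $\boldsymbol{x}$, $$\frac12\sum_{a_k,w}\Big|p(a_k,w|\boldsymbol{x})-\tfrac1d\,p(w|\boldsymbol{x})\Big|\le\frac{(d-1)^2+1}{2d}\,\widetilde{Q}_M(\boldsymbol{x})\,I^{N,M,d}_{\mathsf{A}},$$ where $I^{N,M,d}_{\mathsf{A}}$ is evaluated on the observed distribution, $\widetilde{Q}_M(\boldsymbol{x})=\max_w\big[p(\boldsymbol{x}|w)/\widetilde{p}_{\min}(w)\big]$ and $\widetilde{p}_{\min}(w)=\min_{\boldsymbol{x}'}p(\boldsymbol{x}'|w)$,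 the minimum taken over the settings $\boldsymbol{x}'$ appearing in $I^{N,M,d}_{\mathsf{A}}$.
   Context: Notation: $[\Omega]$ is $\Omega$ mod $d$, $\langle[\Omega]\rangle=\sum_{i=0}^{d-1}iP([\Omega]=i)$. For a party $X$ with observables $X_1,\dots,X_M$, $X_{iM+\gamma}:=[X_\gamma+i]$ for $\gamma\in\{1,\dots,M\}$. The Bell expression $I^{N,M,d}_{\mathsf{A}}$ for parties $A^{(1)},\dots,A^{(N)}$: for $N=2$, $I^{2,M,d}=\sum_{\alpha=1}^M\big(\langle[A^{(1)}_\alpha-A^{(2)}_\alpha]\rangle+\langle[A^{(2)}_\alpha-A^{(1)}_{\alpha+1}]\rangle\big)$ (settings appearing: $(\alpha,\alpha)$ and $(\alpha+1\bmod M,\alpha)$); in general $I^{N,M,d}=\frac{1}{M^{N-2}}\sum_{\alpha_1,\dots,\alpha_{N-1}=1}^{M}\big(\langle[A^{(1)}_{\alpha_1}+S]\rangle+\langle[-A^{(1)}_{\alpha_1+1}-S]\rangle\big)$ with $S=\sum_{k=2}^{N-1}(-1)^{k-1}A^{(k)}_{\alpha_{k-1}+\alpha_k-1}+(-1)^{N-1}A^{(N)}_{\alpha_{N-1}}$ (for $N=2$, $S=-A^{(2)}_{\alpha_1}$), i.e. the recursion $I^{N}=\frac1M\sum_{\alpha_{N-1}}I^{N-1}(\alpha_{N-1})\circ A^{(N)}_{\alpha_{N-1}}$ with the last party's index relabelled $\alpha_{N-2}\to\alpha_{N-2}+\alpha_{N-1}-1$ and $A^{(N)}$ inserted with sign opposite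 to $A^{(N-1)}$. Local bound $d-1$, minimal nonsignalling value $0$. Settings "appearing in" $I^{N,M,d}$ are the setting tuples (indices reduced mod $M$) whose joint distributions enter some bracket. *)

theory Defs
  imports Complex_Main "HOL-Library.FuncSet"
begin

definition settings_space :: "nat \<Rightarrow> nat \<Rightarrow> (nat \<Rightarrow> nat) set" where
  "settings_space N M = PiE {1..N} (\<lambda>_. {1..M})"

definition outcomes_space :: "nat \<Rightarrow> nat \<Rightarrow> (nat \<Rightarrow> nat) set" where
  "outcomes_space N d = PiE {1..N} (\<lambda>_. {0..<d})"

text \<open>Observable index j = i*M + gamma (gamma in 1..M) denotes [X_gamma + i].\<close>
definition sidx :: "nat \<Rightarrow> nat \<Rightarrow> nat" where
  "sidx M j = (j - 1) mod M + 1"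

definition sshift :: "nat \<Rightarrow> nat \<Rightarrow> nat" where
  "sshift M j = (j - 1) div M"

definition bracket_setting :: "nat \<Rightarrow> nat \<Rightarrow> (nat \<Rightarrow> nat) \<Rightarrow> (nat \<Rightarrow> nat)" where
  "bracket_setting N M J = (\<lambda>k\<in>{1..N}. sidx M (J k))"

text \<open>The expectation of [sum_k sigma_k A^(k)_(J k)] for a behaviour p (p x a = p(a|x)).\<close>
definition bracket_exp ::
  "nat \<Rightarrow> nat \<Rightarrow> nat \<Rightarrow> ((nat \<Rightarrow> nat) \<Rightarrow> (nat \<Rightarrow> nat) \<Rightarrow> real) \<Rightarrow> (nat \<Rightarrow> nat) \<Rightarrow> (nat \<Rightarrow> int) \<Rightarrow> real" where
  "bracket_exp N M d p J \<sigma> =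
     (\<Sum>a\<in>outcomes_space N d. p (bracket_setting N M J) a *
        of_int ((\<Sum>k=1..N. \<sigma> k * (int (a k) + int (sshift M (J k)))) mod int d))"

text \<open>Indices for the first bracket [A^(1)_{alpha_1} + S] and second bracket [-A^(1)_{alpha_1+1} - S].\<close>
definition J1 :: "nat \<Rightarrow> (nat \<Rightarrow> nat) \<Rightarrow> nat \<Rightarrow> nat" where
  "J1 N \<alpha> k = (if k = 1 then \<alpha> 1 else if k = N then \<alpha> (N - 1) else \<alpha> (k - 1) + \<alpha> k - 1)"

definition J2 :: "nat \<Rightarrow> (nat \<Rightarrow> nat) \<Rightarrow> nat \<Rightarrow> nat" where
  "J2 N \<alpha> k = (if k = 1 then \<alpha> 1 + 1 else J1 N \<alpha> k)"

definition sgn1 :: "nat \<Rightarrow> int" where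
  "sgn1 k = (-1) ^ (k - 1)"

definition alpha_space :: "nat \<Rightarrow> nat \<Rightarrow> (nat \<Rightarrow> nat) set" where
  "alpha_space N M = PiE {1..N - 1} (\<lambda>_. {1..M})"

definition bell_I :: "nat \<Rightarrow> nat \<Rightarrow> nat \<Rightarrow> ((nat \<Rightarrow> nat) \<Rightarrow> (nat \<Rightarrow> nat) \<Rightarrow> real) \<Rightarrow> real" where
  "bell_I N M d p = (1 / real M ^ (N - 2)) *
     (\<Sum>\<alpha>\<in>alpha_space N M.
        bracket_exp N M d p (J1 N \<alpha>) sgn1 + bracket_exp N M d p (J2 N \<alpha>) (\<lambda>k. - sgn1 k))"

definition settings_appearing :: "nat \<Rightarrow> nat \<Rightarrow> (nat \<Rightarrow> nat) set" where
  "settings_appearing N M =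
     (\<lambda>\<alpha>. bracket_setting N M (J1 N \<alpha>)) ` alpha_space N M \<union>
     (\<lambda>\<alpha>. bracket_setting N M (J2 N \<alpha>)) ` alpha_space N M"

definition nonsignalling ::
  "nat \<Rightarrow> nat \<Rightarrow> nat \<Rightarrow> ((nat \<Rightarrow> nat) \<Rightarrow> (nat \<Rightarrow> nat) \<Rightarrow> real) \<Rightarrow> bool" where
  "nonsignalling N M d p \<longleftrightarrow>
     (\<forall>k\<in>{1..N}. \<forall>x\<in>settings_space N M. \<forall>x'\<in>settings_space N M.
        (\<forall>j\<in>{1..N}. j \<noteq> k \<longrightarrow> x j = x' j) \<longrightarrow>
        (\<forall>a\<in>outcomes_space N d.
           (\<Sum>b<d. p x (a(k := b))) = (\<Sum>b<d. p x' (a(k := b)))))"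

definition p_x :: "'w set \<Rightarrow> ('w \<Rightarrow> real) \<Rightarrow> ('w \<Rightarrow> (nat \<Rightarrow> nat) \<Rightarrow> real) \<Rightarrow> (nat \<Rightarrow> nat) \<Rightarrow> real" where
  "p_x W pw pxw x = (\<Sum>w\<in>W. pw w * pxw w x)"

definition p_w_given_x :: "'w set \<Rightarrow> ('w \<Rightarrow> real) \<Rightarrow> ('w \<Rightarrow> (nat \<Rightarrow> nat) \<Rightarrow> real) \<Rightarrow> 'w \<Rightarrow> (nat \<Rightarrow> nat) \<Rightarrow> real" where
  "p_w_given_x W pw pxw w x = pxw w x * pw w / p_x W pw pxw x"

definition observed ::
  "'w set \<Rightarrow> ('w \<Rightarrow> real) \<Rightarrow> ('w \<Rightarrow> (nat \<Rightarrow> nat) \<Rightarrow> real) \<Rightarrow> ('w \<Rightarrow> (nat \<Rightarrow> nat) \<Rightarrow> (nat \<Rightarrow> nat) \<Rightarrow> real)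
     \<Rightarrow> (nat \<Rightarrow> nat) \<Rightarrow> (nat \<Rightarrow> nat) \<Rightarrow> real" where
  "observed W pw pxw P x a = (\<Sum>w\<in>W. p_w_given_x W pw pxw w x * P w x a)"

definition marginal :: "nat \<Rightarrow> nat \<Rightarrow> ((nat \<Rightarrow> nat) \<Rightarrow> (nat \<Rightarrow> nat) \<Rightarrow> real) \<Rightarrow> (nat \<Rightarrow> nat) \<Rightarrow> nat \<Rightarrow> nat \<Rightarrow> real" where
  "marginal N d p x k b = (\<Sum>a\<in>{a\<in>outcomes_space N d. a k = b}. p x a)"

definition p_tilde_min :: "nat \<Rightarrow> nat \<Rightarrow> ('w \<Rightarrow> (nat \<Rightarrow> nat) \<Rightarrow> real) \<Rightarrow> 'w \<Rightarrow> real" where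
  "p_tilde_min N M pxw w = Min ((pxw w) ` settings_appearing N M)"

definition Q_tilde :: "nat \<Rightarrow> nat \<Rightarrow> 'w set \<Rightarrow> ('w \<Rightarrow> (nat \<Rightarrow> nat) \<Rightarrow> real) \<Rightarrow> (nat \<Rightarrow> nat) \<Rightarrow> real" where
  "Q_tilde N M W pxw x = Max ((\<lambda>w. pxw w x / p_tilde_min N M pxw w) ` W)"

end

theory Submission imports Defs begin

lemma sum_PiE_insert:
  assumes "x \<notin> S" "finite S" "\<And>i. i \<in> insert x S \<Longrightarrow> finite (T i)"
  shows "(\<Sum>f\<in>PiE (insert x S) T. g f) = (\<Sum>h\<in>PiE S T. \<Sum>y\<in>T x. g (h(x:=y)))"
proof -
  have "(\<Sum>f\<in>PiE (insert x S) T. g f) = (\<Sum>p\<in>T x \<times> PiE S T. g ((\<lambda>(y, h). h(x := y)) p))"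
    unfolding PiE_insert_eq by (rule sum.reindex[OF inj_combinator[OF assms(1)], unfolded comp_def])
  also have "\<dots> = (\<Sum>y\<in>T x. \<Sum>h\<in>PiE S T. g (h(x:=y)))"
    by (simp add: sum.cartesian_product split_def)
  also have "\<dots> = (\<Sum>h\<in>PiE S T. \<Sum>y\<in>T x. g (h(x:=y)))"
    by (rule sum.swap)
  finally show ?thesis .
qed

lemma sidx_range: "M > 0 \<Longrightarrow> sidx M j \<in> {1..M}"
  unfolding sidx_def by (auto simp: Suc_le_eq)

lemma bracket_setting_in: "M > 0 \<Longrightarrow> bracket_setting N M J \<in> settings_space N M"
  unfolding bracket_setting_def settings_space_def using sidx_range by auto

lemma finite_outcomes: "finite (outcomes_space N d)"
  unfolding outcomes_space_def by (rule finite_PiE) auto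

lemma finite_settings: "finite (settings_space N M)"
  unfolding settings_space_def by (rule finite_PiE) auto

lemma finite_alpha: "finite (alpha_space N M)"
  unfolding alpha_space_def by (rule finite_PiE) auto

lemma outcomes_insert:
  assumes "k \<in> {1..N}"
  shows "outcomes_space N d = PiE (insert k ({1..N} - {k})) (\<lambda>_. {0..<d})"
  using assms unfolding outcomes_space_def by (simp add: insert_absorb)

lemma sum_outcomes_split:
  assumes "k \<in> {1..N}"
  shows "(\<Sum>a\<in>outcomes_space N d. f a) =
    (\<Sum>h\<in>PiE ({1..N} - {k}) (\<lambda>_. {0..<d}). \<Sum>b\<in>{0..<d}. f (h(k:=b)))"
  unfolding outcomes_insert[OF assms]
  by (rule sum_PiE_insert) auto

lemma ns_step:
  assumes ns: "nonsignalling N M d p" and d: "d > 0" and k: "k \<in> {1..N}"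
    and x: "x \<in> settings_space N M" and x': "x' \<in> settings_space N M"
    and agree: "\<forall>j\<in>{1..N}. j \<noteq> k \<longrightarrow> x j = x' j"
    and g: "\<forall>a c. g (a(k := c)) = g a"
  shows "(\<Sum>a\<in>outcomes_space N d. p x a * g a) = (\<Sum>a\<in>outcomes_space N d. p x' a * g a)"
proof -
  have rep: "(\<Sum>a\<in>outcomes_space N d. p y a * g a) =
     (\<Sum>h\<in>PiE ({1..N} - {k}) (\<lambda>_. {0..<d}). g (h(k:=0)) * (\<Sum>b<d. p y (h(k:=b))))" for y
  proof -
    have "(\<Sum>a\<in>outcomes_space N d. p y a * g a) =
     (\<Sum>h\<in>PiE ({1..N} - {k}) (\<lambda>_. {0..<d}). \<Sum>b\<in>{0..<d}. p y (h(k:=b)) * g (h(k:=b)))"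
      by (rule sum_outcomes_split[OF k])
    also have "\<dots> = (\<Sum>h\<in>PiE ({1..N} - {k}) (\<lambda>_. {0..<d}). g (h(k:=0)) * (\<Sum>b<d. p y (h(k:=b))))"
    proof (rule sum.cong[OF refl])
      fix h
      have "g (h(k:=b)) = g (h(k:=0))" for b
        using g[rule_format, of "h(k:=0)" b] by simp
      then show "(\<Sum>b\<in>{0..<d}. p y (h(k:=b)) * g (h(k:=b))) = g (h(k:=0)) * (\<Sum>b<d. p y (h(k:=b)))"
        by (auto simp: sum_distrib_left atLeast0LessThan intro!: sum.cong)
    qed
    finally show ?thesis .
  qed
  have "(\<Sum>b<d. p x (h(k:=b))) = (\<Sum>b<d. p x' (h(k:=b)))"
    if h: "h \<in> PiE ({1..N} - {k}) (\<lambda>_. {0..<d})" for h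
  proof -
    have hk: "h(k:=0) \<in> outcomes_space N d"
      unfolding outcomes_insert[OF k] by (rule PiE_fun_upd) (use h d in auto)
    from ns k x x' agree hk have "(\<Sum>b<d. p x ((h(k:=0))(k := b))) = (\<Sum>b<d. p x' ((h(k:=0))(k := b)))"
      unfolding nonsignalling_def by blast
    then show ?thesis by simp
  qed
  then show ?thesis unfolding rep by (intro sum.cong) auto
qed

lemma ns_marg:
  assumes ns: "nonsignalling N M d p" and d: "d > 0" and k: "k \<in> {1..N}"
    and x: "x \<in> settings_space N M" and x': "x' \<in> settings_space N M"
    and xk: "x k = x' k"
  shows "(\<Sum>a\<in>outcomes_space N d. p x a * F (a k)) = (\<Sum>a\<in>outcomes_space N d. p x' a * F (a k))"
proof -
  have main: "\<forall>x x'. x \<in> settings_space N M \<longrightarrow> x' \<in> settings_space N M \<longrightarrow>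
      (\<forall>j\<in>{1..N} - B. x j = x' j) \<longrightarrow>
      (\<Sum>a\<in>outcomes_space N d. p x a * F (a k)) = (\<Sum>a\<in>outcomes_space N d. p x' a * F (a k))"
    if "finite B" "B \<subseteq> {1..N} - {k}" for B
    using that
  proof (induction B rule: finite_induct)
    case empty
    show ?case
    proof (intro allI impI)
      fix x x' assume "x \<in> settings_space N M" "x' \<in> settings_space N M" "\<forall>j\<in>{1..N} - {}. x j = x' j"
      then have "x = x'" unfolding settings_space_def by (intro PiE_ext[of x "{1..N}" "\<lambda>_. {1..M}"]) auto
      then show "(\<Sum>a\<in>outcomes_space N d. p x a * F (a k)) = (\<Sum>a\<in>outcomes_space N d. p x' a * F (a k))" by simp
    qed
  next
    case (insert j B)
    show ?case
    proof (intro allI impI)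
      fix x x' assume x: "x \<in> settings_space N M" and x': "x' \<in> settings_space N M"
        and ag: "\<forall>i\<in>{1..N} - insert j B. x i = x' i"
      have j: "j \<in> {1..N}" "j \<noteq> k" using insert.prems by auto
      define x'' where "x'' = x'(j := x j)"
      have x'': "x'' \<in> settings_space N M"
      proof -
        have "x j \<in> {1..M}" using x j unfolding settings_space_def by auto
        then have "x'(j := x j) \<in> PiE (insert j {1..N}) (\<lambda>_. {1..M})"
          using x' unfolding settings_space_def by (rule PiE_fun_upd)
        then show ?thesis using j unfolding x''_def settings_space_def by (simp add: insert_absorb)
      qed
      have "(\<Sum>a\<in>outcomes_space N d. p x a * F (a k)) = (\<Sum>a\<in>outcomes_space N d. p x'' a * F (a k))"
      proof -
        have IH: "\<forall>x x'. x \<in> settings_space N M \<longrightarrow> x' \<in> settings_space N M \<longrightarrow>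
          (\<forall>j\<in>{1..N} - B. x j = x' j) \<longrightarrow>
          (\<Sum>a\<in>outcomes_space N d. p x a * F (a k)) = (\<Sum>a\<in>outcomes_space N d. p x' a * F (a k))"
          using insert.IH insert.prems by (meson insert_subset)
        have "\<forall>i\<in>{1..N} - B. x i = x'' i"
          using ag unfolding x''_def by auto
        then show ?thesis using IH[rule_format, OF x x''] by simp
      qed
      also have "\<dots> = (\<Sum>a\<in>outcomes_space N d. p x' a * F (a k))"
        apply (rule ns_step[OF ns d j(1) x'' x', where g="\<lambda>a. F (a k)"])
        subgoal using j(2) by (simp add: x''_def)
        subgoal using j(2) by simp
        done
      finally show "(\<Sum>a\<in>outcomes_space N d. p x a * F (a k)) = (\<Sum>a\<in>outcomes_space N d. p x' a * F (a k))" .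
    qed
  qed
  have "(\<forall>j\<in>{1..N} - ({1..N} - {k}). x j = x' j)" using xk by auto
  moreover have "finite ({1..N} - {k})" "{1..N} - {k} \<subseteq> {1..N} - {k}" by auto
  ultimately show ?thesis using main x x' by blast
qed

lemma sum_marg:
  assumes k: "k \<in> {1..N}"
  shows "(\<Sum>a\<in>outcomes_space N d. p x a * F (a k)) = (\<Sum>b<d. F b * marginal N d p x k b)"
proof -
  have img: "(\<lambda>a. a k) ` outcomes_space N d \<subseteq> {..<d}"
    using k unfolding outcomes_space_def by auto
  have "(\<Sum>b<d. F b * marginal N d p x k b) = (\<Sum>b<d. \<Sum>a\<in>{a\<in>outcomes_space N d. a k = b}. p x a * F (a k))"
    unfolding marginal_def by (auto simp: sum_distrib_left mult.commute intro!: sum.cong)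
  also have "\<dots> = (\<Sum>a\<in>outcomes_space N d. p x a * F (a k))"
    by (rule sum.group[OF finite_outcomes _ img]) simp
  finally show ?thesis by simp
qed

lemma mod_subadd: "(0::int) < d \<Longrightarrow> (x + y) mod d \<le> x mod d + y mod d"
proof -
  assume d: "0 < d"
  have "(x + y) mod d = (x mod d + y mod d) mod d" by (simp add: mod_add_eq)
  also have "\<dots> \<le> x mod d + y mod d" using d by (intro zmod_le_nonneg_dividend) simp
  finally show ?thesis .
qed

lemma pair_bound:
  assumes ns: "nonsignalling N M d p" and pnn: "\<forall>x\<in>settings_space N M. \<forall>a\<in>outcomes_space N d. p x a \<ge> 0"
    and d: "d > 0" and k: "k \<in> {1..N}"
    and x: "x \<in> settings_space N M" and x': "x' \<in> settings_space N M"
    and agree: "\<forall>j\<in>{1..N}. j \<noteq> k \<longrightarrow> x j = x' j"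
    and u: "\<forall>a c. u (a(k := c)) = (u a :: int)"
  shows "(\<Sum>a\<in>outcomes_space N d. p x a * of_int ((z (a k) + u a) mod int d))
       + (\<Sum>a\<in>outcomes_space N d. p x' a * of_int ((- (z' (a k) + u a)) mod int d))
     \<ge> (\<Sum>a\<in>outcomes_space N d. p x a * of_int ((z (a k) - t) mod int d))
       - (\<Sum>a\<in>outcomes_space N d. p x' a * of_int ((z' (a k) - t) mod int d))"
proof -
  let ?O = "outcomes_space N d"
  define R :: "(nat \<Rightarrow> nat) \<Rightarrow> real" where "R a = of_int ((- u a - t) mod int d)" for a
  have dd: "(0::int) < int d" using d by simp
  have 1: "(\<Sum>a\<in>?O. p x a * of_int ((z (a k) + u a) mod int d))
      \<ge> (\<Sum>a\<in>?O. p x a * (of_int ((z (a k) - t) mod int d) - R a))"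
  proof (rule sum_mono)
    fix a assume a: "a \<in> ?O"
    have "(z (a k) - t) mod int d \<le> (z (a k) + u a) mod int d + (- u a - t) mod int d"
      using mod_subadd[OF dd, of "z (a k) + u a" "- u a - t"] by simp
    then have "of_int ((z (a k) - t) mod int d) - R a \<le> (of_int ((z (a k) + u a) mod int d) :: real)"
      unfolding R_def by linarith
    then show "p x a * (of_int ((z (a k) - t) mod int d) - R a) \<le> p x a * of_int ((z (a k) + u a) mod int d)"
      using pnn x a by (intro mult_left_mono) auto
  qed
  have 2: "(\<Sum>a\<in>?O. p x' a * of_int ((- (z' (a k) + u a)) mod int d))
      \<ge> (\<Sum>a\<in>?O. p x' a * (R a - of_int ((z' (a k) - t) mod int d)))"
  proof (rule sum_mono)
    fix a assume a: "a \<in> ?O"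
    have "(- u a - t) mod int d \<le> (- (z' (a k) + u a)) mod int d + (z' (a k) - t) mod int d"
      using mod_subadd[OF dd, of "- (z' (a k) + u a)" "z' (a k) - t"] by simp
    then have "R a - of_int ((z' (a k) - t) mod int d) \<le> (of_int ((- (z' (a k) + u a)) mod int d) :: real)"
      unfolding R_def by linarith
    then show "p x' a * (R a - of_int ((z' (a k) - t) mod int d)) \<le> p x' a * of_int ((- (z' (a k) + u a)) mod int d)"
      using pnn x' a by (intro mult_left_mono) auto
  qed
  have 3: "(\<Sum>a\<in>?O. p x a * R a) = (\<Sum>a\<in>?O. p x' a * R a)"
    by (rule ns_step[OF ns d k x x' agree, where g=R]) (simp add: R_def u)
  show ?thesis
    using 1 2 3 by (simp add: sum_subtractf right_diff_distrib)
qed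

lemma mod_pred_diff:
  assumes "(0::int) < d"
  shows "(y - 1) mod d - y mod d = (if y mod d = 0 then d - 1 else -1)"
proof -
  have "(y - 1) mod d = (y mod d - 1) mod d" by (metis mod_diff_left_eq)
  moreover have "0 \<le> y mod d" "y mod d < d" using assms by auto
  ultimately show ?thesis
    by (cases "y mod d = 0") (auto simp: mod_pos_pos_trivial zmod_minus1)
qed

definition dn :: "nat \<Rightarrow> nat \<Rightarrow> nat" where "dn M v = (if v = 1 then M else v - 1)"
definition up :: "nat \<Rightarrow> nat \<Rightarrow> nat" where "up M v = (if v = M then 1 else v + 1)"

definition phi :: "nat \<Rightarrow> nat \<Rightarrow> nat \<Rightarrow> (nat \<Rightarrow> nat) \<Rightarrow> (nat \<Rightarrow> nat)" where
  "phi N M k \<alpha> = (\<lambda>j. if j \<in> {1..N-1} then (if j < k then (if odd j then dn M (\<alpha> j) else up M (\<alpha> j)) else \<alpha> j) else undefined)"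

definition psi :: "nat \<Rightarrow> nat \<Rightarrow> nat \<Rightarrow> (nat \<Rightarrow> nat) \<Rightarrow> (nat \<Rightarrow> nat)" where
  "psi N M k \<alpha> = (\<lambda>j. if j \<in> {1..N-1} then (if j < k then (if odd j then up M (\<alpha> j) else dn M (\<alpha> j)) else \<alpha> j) else undefined)"

lemma dn_range: "M \<ge> 1 \<Longrightarrow> v \<in> {1..M} \<Longrightarrow> dn M v \<in> {1..M}"
  unfolding dn_def by auto
lemma up_range: "M \<ge> 1 \<Longrightarrow> v \<in> {1..M} \<Longrightarrow> up M v \<in> {1..M}"
  unfolding up_def by auto
lemma up_dn: "M \<ge> 1 \<Longrightarrow> v \<in> {1..M} \<Longrightarrow> up M (dn M v) = v"
  unfolding dn_def up_def by auto
lemma dn_up: "M \<ge> 1 \<Longrightarrow> v \<in> {1..M} \<Longrightarrow> dn M (up M v) = v"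
  unfolding dn_def up_def by auto

lemma phi_in: "M \<ge> 1 \<Longrightarrow> \<alpha> \<in> alpha_space N M \<Longrightarrow> phi N M k \<alpha> \<in> alpha_space N M"
  unfolding alpha_space_def phi_def using dn_range up_range by (auto simp: PiE_iff extensional_def)
lemma psi_in: "M \<ge> 1 \<Longrightarrow> \<alpha> \<in> alpha_space N M \<Longrightarrow> psi N M k \<alpha> \<in> alpha_space N M"
  unfolding alpha_space_def psi_def using dn_range up_range by (auto simp: PiE_iff extensional_def)

lemma phi_bij:
  assumes M: "M \<ge> 1"
  shows "bij_betw (phi N M k) (alpha_space N M) (alpha_space N M)"
proof (rule bij_betw_byWitness[where f'="psi N M k"])
  show "\<forall>a\<in>alpha_space N M. psi N M k (phi N M k a) = a"
  proof
    fix a assume a: "a \<in> alpha_space N M"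
    show "psi N M k (phi N M k a) = a"
    proof
      fix j
      show "psi N M k (phi N M k a) j = a j"
      proof (cases "j \<in> {1..N-1}")
        case True
        then have "a j \<in> {1..M}" using a unfolding alpha_space_def by auto
        then show ?thesis using True M unfolding psi_def phi_def by (auto simp: up_dn dn_up)
      next
        case False
        then show ?thesis using a unfolding psi_def phi_def alpha_space_def by (auto simp: PiE_iff extensional_def)
      qed
    qed
  qed
  show "\<forall>a\<in>alpha_space N M. phi N M k (psi N M k a) = a"
  proof
    fix a assume a: "a \<in> alpha_space N M"
    show "phi N M k (psi N M k a) = a"
    proof
      fix j
      show "phi N M k (psi N M k a) j = a j"
      proof (cases "j \<in> {1..N-1}")
        case True
        then have "a j \<in> {1..M}" using a unfolding alpha_space_def by auto
        then show ?thesis using True M unfolding psi_def phi_def by (auto simp: up_dn dn_up)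
      next
        case False
        then show ?thesis using a unfolding psi_def phi_def alpha_space_def by (auto simp: PiE_iff extensional_def)
      qed
    qed
  qed
  show "phi N M k ` alpha_space N M \<subseteq> alpha_space N M" using phi_in[OF M] by auto
  show "psi N M k ` alpha_space N M \<subseteq> alpha_space N M" using psi_in[OF M] by auto
qed

definition dl :: "nat \<Rightarrow> nat \<Rightarrow> int" where
  "dl k m = (if m < k then (if odd m then -1 else 1) else 0)"

lemma phi_cong:
  assumes M: "M \<ge> 1" and a: "\<alpha> \<in> alpha_space N M" and m: "m \<in> {1..N-1}"
  shows "int M dvd (int (phi N M k \<alpha> m) - int (\<alpha> m) - dl k m)"
proof -
  have am: "\<alpha> m \<in> {1..M}" using a m unfolding alpha_space_def by auto
  show ?thesis
    using am m M unfolding phi_def dl_def dn_def up_def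
    by (auto simp: of_nat_diff)
qed

lemma dl_sum:
  assumes "j \<ge> 2"
  shows "dl k (j - 1) + dl k j = (if j = k then sgn1 k else 0)"
proof -
  consider "j < k" | "j = k" | "j > k" by linarith
  then show ?thesis
  proof cases
    case 1
    then show ?thesis using assms unfolding dl_def by (auto elim: oddE evenE simp: odd_Suc_minus_one)
  next
    case 2
    then show ?thesis using assms unfolding dl_def sgn1_def by auto
  next
    case 3
    then show ?thesis unfolding dl_def by auto
  qed
qed

lemma alpha_val: "\<alpha> \<in> alpha_space N M \<Longrightarrow> m \<in> {1..N-1} \<Longrightarrow> \<alpha> m \<in> {1..M}"
  unfolding alpha_space_def by auto

lemma J_cong:
  assumes N: "N \<ge> 2" and M: "M \<ge> 1" and a: "\<alpha> \<in> alpha_space N M"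
    and k: "k \<in> {1..N}" and j: "j \<in> {1..N}"
  shows "int M dvd (int (J2 N (phi N M k \<alpha>) j) - int (J1 N \<alpha> j) - (if j = k then sgn1 k else 0))"
proof -
  let ?b = "phi N M k \<alpha>"
  have b: "?b \<in> alpha_space N M" using phi_in[OF M a] .
  define D where "D m = int (?b m) - int (\<alpha> m) - dl k m" for m
  have D: "int M dvd D m" if "m \<in> {1..N-1}" for m
    unfolding D_def using phi_cong[OF M a that] .
  consider "j = 1" | "j = N" "j \<noteq> 1" | "2 \<le> j" "j \<le> N - 1" using j by force
  then show ?thesis
  proof cases
    case 1
    have "int (J2 N ?b j) - int (J1 N \<alpha> j) - (if j = k then sgn1 k else 0) = D 1"
      using 1 k unfolding J2_def J1_def D_def dl_def sgn1_def by auto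
    then show ?thesis using D[of 1] N by auto
  next
    case 2
    have "int (J2 N ?b j) - int (J1 N \<alpha> j) - (if j = k then sgn1 k else 0) = D (N - 1) + (dl k (N-1) - (if N = k then sgn1 k else 0))"
      using 2 unfolding J2_def J1_def D_def by auto
    also have "dl k (N-1) - (if N = k then sgn1 k else 0) = 0"
    proof -
      have "dl k (N-1) = dl k (N-1) + dl k N" unfolding dl_def using k by auto
      also have "\<dots> = (if N = k then sgn1 k else 0)" using dl_sum[of N k] N by auto
      finally show ?thesis by simp
    qed
    finally show ?thesis using D[of "N-1"] N by auto
  next
    case 3
    have jj: "j-1 \<in> {1..N-1}" "j \<in> {1..N-1}" using 3 by auto
    have v1: "\<alpha> (j-1) \<ge> 1" "\<alpha> j \<ge> 1" "?b (j-1) \<ge> 1" "?b j \<ge> 1"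
      using alpha_val[OF a jj(1)] alpha_val[OF a jj(2)] alpha_val[OF b jj(1)] alpha_val[OF b jj(2)] by auto
    have "int (J2 N ?b j) - int (J1 N \<alpha> j) - (if j = k then sgn1 k else 0)
        = D (j-1) + D j + (dl k (j-1) + dl k j - (if j = k then sgn1 k else 0))"
      using 3 v1 N unfolding J2_def J1_def D_def by (auto simp: of_nat_diff)
    also have "dl k (j-1) + dl k j - (if j = k then sgn1 k else 0) = 0"
      using dl_sum[of j k] 3 by auto
    finally show ?thesis using D[OF jj(1)] D[OF jj(2)] by auto
  qed
qed

lemma alt_telescope:
  fixes a :: "nat \<Rightarrow> int"
  assumes "n \<ge> 1"
  shows "(\<Sum>j=1..n. sgn1 j * (a (j-1) + a j)) = a 0 + sgn1 n * a n"
  using assms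
proof (induction n rule: dec_induct)
  case base
  then show ?case by (simp add: sgn1_def)
next
  case (step n)
  have "sgn1 (Suc n) = - sgn1 n" using step.hyps unfolding sgn1_def
    by (cases n) auto
  then show ?case using step by (simp add: algebra_simps)
qed

lemma L1_const:
  assumes N: "N \<ge> 2" and a: "\<alpha> \<in> alpha_space N M"
  shows "(\<Sum>j=1..N. sgn1 j * int (J1 N \<alpha> j)) = 1 + sgn1 N - (\<Sum>j=1..N. sgn1 j)"
proof -
  define ab where "ab m = (if m = 0 \<or> m = N then 1 else int (\<alpha> m))" for m
  have "int (J1 N \<alpha> j) = ab (j-1) + ab j - 1" if jj: "j \<in> {1..N}" for j
  proof -
    consider "j = 1" | "j = N" "j \<noteq> 1" | "2 \<le> j" "j \<le> N - 1" using jj by force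
    then show ?thesis
    proof cases
      case 3
      have jj: "j-1 \<in> {1..N-1}" "j \<in> {1..N-1}" using 3 by auto
      have "\<alpha> (j-1) \<ge> 1" "\<alpha> j \<ge> 1" using alpha_val[OF a jj(1)] alpha_val[OF a jj(2)] by auto
      then show ?thesis using 3 N unfolding J1_def ab_def by (auto simp: of_nat_diff)
    qed (use N in \<open>auto simp: J1_def ab_def\<close>)
  qed
  then have "(\<Sum>j=1..N. sgn1 j * int (J1 N \<alpha> j)) = (\<Sum>j=1..N. sgn1 j * (ab (j-1) + ab j) - sgn1 j)"
    by (intro sum.cong) (simp_all add: right_diff_distrib)
  also have "\<dots> = (\<Sum>j=1..N. sgn1 j * (ab (j-1) + ab j)) - (\<Sum>j=1..N. sgn1 j)"
    by (simp add: sum_subtractf)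
  also have "\<dots> = 1 + sgn1 N - (\<Sum>j=1..N. sgn1 j)"
    using alt_telescope[of N ab] N by (simp add: ab_def)
  finally show ?thesis .
qed

lemma L2_rel:
  assumes N: "N \<ge> 2"
  shows "(\<Sum>j=1..N. sgn1 j * int (J2 N \<beta> j)) = (\<Sum>j=1..N. sgn1 j * int (J1 N \<beta> j)) + 1"
proof -
  have "(\<Sum>j=1..N. sgn1 j * int (J2 N \<beta> j)) = (\<Sum>j=1..N. sgn1 j * int (J1 N \<beta> j) + (if j = 1 then 1 else 0))"
    by (intro sum.cong) (auto simp: J2_def J1_def sgn1_def)
  also have "\<dots> = (\<Sum>j=1..N. sgn1 j * int (J1 N \<beta> j)) + 1"
    using N by (simp add: sum.distrib)
  finally show ?thesis .
qed

definition Vf :: "nat \<Rightarrow> nat \<Rightarrow> nat \<Rightarrow> ((nat\<Rightarrow>nat)\<Rightarrow>(nat\<Rightarrow>nat)\<Rightarrow>real) \<Rightarrow> nat \<Rightarrow> (nat\<Rightarrow>nat) \<Rightarrow> int \<Rightarrow> int \<Rightarrow> real" where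
  "Vf N M d p k x t m = (\<Sum>a\<in>outcomes_space N d. p (x(k := nat ((m - 1) mod int M + 1))) a *
      of_int ((sgn1 k * (int (a k) + (m - 1) div int M) - t) mod int d))"

lemma sidx_int: "J \<ge> 1 \<Longrightarrow> int (sidx M J) = (int J - 1) mod int M + 1"
  unfolding sidx_def by (simp add: of_nat_mod of_nat_diff)

lemma sshift_int: "J \<ge> 1 \<Longrightarrow> int (sshift M J) = (int J - 1) div int M"
  unfolding sshift_def by (simp add: of_nat_div of_nat_diff)

lemma shift_rel: "J \<ge> 1 \<Longrightarrow> int M * int (sshift M J) = int J - int (sidx M J)"
  unfolding sshift_int sidx_int
  by (metis add.commute diff_diff_eq minus_mod_eq_mult_div mult.commute)

lemma sidx_cong: "A \<ge> 1 \<Longrightarrow> B \<ge> 1 \<Longrightarrow> int M dvd (int A - int B) \<Longrightarrow> sidx M A = sidx M B"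
proof -
  assume A: "A \<ge> 1" and B: "B \<ge> 1" and dv: "int M dvd (int A - int B)"
  have "(int A - 1) mod int M = (int B - 1) mod int M"
    using dv by (simp add: mod_eq_dvd_iff)
  then have "int (sidx M A) = int (sidx M B)" using sidx_int[OF A] sidx_int[OF B] by simp
  then show ?thesis by simp
qed

lemma upd_in: "x \<in> settings_space N M \<Longrightarrow> k \<in> {1..N} \<Longrightarrow> v \<in> {1..M} \<Longrightarrow> x(k := v) \<in> settings_space N M"
proof -
  assume x: "x \<in> settings_space N M" and k: "k \<in> {1..N}" and v: "v \<in> {1..M}"
  have "x(k := v) \<in> PiE (insert k {1..N}) (\<lambda>_. {1..M})"
    using x v unfolding settings_space_def by (intro PiE_fun_upd) auto
  then show ?thesis using k unfolding settings_space_def by (simp add: insert_absorb)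
qed

lemma J1_pos:
  assumes N: "N \<ge> 2" and a: "\<alpha> \<in> alpha_space N M" and j: "j \<in> {1..N}"
  shows "J1 N \<alpha> j \<ge> 1"
proof -
  consider "j = 1" | "j = N" "j \<noteq> 1" | "2 \<le> j" "j \<le> N - 1" using j by force
  then show ?thesis
  proof cases
    case 1
    have "1 \<in> {1..N-1}" using N by auto
    then show ?thesis using alpha_val[OF a] 1 unfolding J1_def by force
  next
    case 2
    have "N - 1 \<in> {1..N-1}" using N by auto
    then show ?thesis using alpha_val[OF a] 2 unfolding J1_def by force
  next
    case 3
    have jj: "j-1 \<in> {1..N-1}" "j \<in> {1..N-1}" using 3 by auto
    have "\<alpha> (j-1) \<ge> 1" "\<alpha> j \<ge> 1" using alpha_val[OF a jj(1)] alpha_val[OF a jj(2)] by auto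
    then show ?thesis using 3 unfolding J1_def by auto
  qed
qed

lemma J2_pos:
  assumes N: "N \<ge> 2" and a: "\<alpha> \<in> alpha_space N M" and j: "j \<in> {1..N}"
  shows "J2 N \<alpha> j \<ge> 1"
  using J1_pos[OF N a j] unfolding J2_def by auto

lemma sgn1_sq: "sgn1 k * sgn1 k = 1"
  unfolding sgn1_def by (simp add: power_mult_distrib[symmetric])

lemma pair_alpha:
  assumes N: "N \<ge> 2" and M: "M \<ge> 1" and d: "d > 0" and ns: "nonsignalling N M d p"
    and pnn: "\<forall>x\<in>settings_space N M. \<forall>a\<in>outcomes_space N d. p x a \<ge> 0"
    and k: "k \<in> {1..N}" and x: "x \<in> settings_space N M" and a: "\<alpha> \<in> alpha_space N M"
  shows "bracket_exp N M d p (J1 N \<alpha>) sgn1 + bracket_exp N M d p (J2 N (phi N M k \<alpha>)) (\<lambda>k. - sgn1 k)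
     \<ge> Vf N M d p k x t (int (J1 N \<alpha> k)) - Vf N M d p k x t (int (J1 N \<alpha> k) + sgn1 k)"
proof -
  define J where "J = J1 N \<alpha>"
  define \<beta> where "\<beta> = phi N M k \<alpha>"
  define J' where "J' = J2 N \<beta>"
  define x1 where "x1 = bracket_setting N M J"
  define x2 where "x2 = bracket_setting N M J'"
  define \<sigma> where "\<sigma> = sgn1 k"
  define i where "i = J k"
  define sh where "sh j = int (sshift M (J j))" for j
  define sh' where "sh' j = int (sshift M (J' j))" for j
  define u where "u a = (\<Sum>j\<in>{1..N}-{k}. sgn1 j * (int (a j) + sh j))" for a :: "nat \<Rightarrow> nat"
  define C where "C = (\<Sum>j\<in>{1..N}. sgn1 j * sh' j) - (\<Sum>j\<in>{1..N}-{k}. sgn1 j * sh j)"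
  have Mp: "M > 0" using M by simp
  have b: "\<beta> \<in> alpha_space N M" unfolding \<beta>_def using phi_in[OF M a] .
  have Jp: "J j \<ge> 1" if "j \<in> {1..N}" for j unfolding J_def using J1_pos[OF N a that] .
  have J'p: "J' j \<ge> 1" if "j \<in> {1..N}" for j unfolding J'_def using J2_pos[OF N b that] .
  have cong: "int M dvd (int (J' j) - int (J j) - (if j = k then \<sigma> else 0))" if "j \<in> {1..N}" for j
    unfolding J'_def J_def \<beta>_def \<sigma>_def using J_cong[OF N M a k that] .
  have sidx_eq: "sidx M (J' j) = sidx M (J j)" if "j \<in> {1..N}" "j \<noteq> k" for j
    using sidx_cong[OF J'p[OF that(1)] Jp[OF that(1)]] cong[OF that(1)] that(2) by simp
  have x1: "x1 \<in> settings_space N M" unfolding x1_def using bracket_setting_in Mp by blast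
  have x2: "x2 \<in> settings_space N M" unfolding x2_def using bracket_setting_in Mp by blast
  have agree: "\<forall>j\<in>{1..N}. j \<noteq> k \<longrightarrow> x1 j = x2 j"
    unfolding x1_def x2_def bracket_setting_def using sidx_eq by simp
  have fin: "finite {1..N}" by simp
  have E1: "bracket_exp N M d p J sgn1 =
      (\<Sum>a\<in>outcomes_space N d. p x1 a * of_int ((\<sigma> * (int (a k) + sh k) + u a) mod int d))"
    unfolding bracket_exp_def x1_def
  proof (intro sum.cong refl arg_cong2[where f="(*)"] arg_cong[where f=of_int] arg_cong2[where f="(mod)"])
    fix a :: "nat \<Rightarrow> nat"
    show "(\<Sum>j = 1..N. sgn1 j * (int (a j) + int (sshift M (J j)))) = \<sigma> * (int (a k) + sh k) + u a"
      unfolding u_def \<sigma>_def sh_def by (subst sum.remove[OF fin k]) simp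
  qed
  have E2: "bracket_exp N M d p J' (\<lambda>k. - sgn1 k) =
      (\<Sum>a\<in>outcomes_space N d. p x2 a * of_int ((- ((\<sigma> * int (a k) + C) + u a)) mod int d))"
    unfolding bracket_exp_def x2_def
  proof (intro sum.cong refl arg_cong2[where f="(*)"] arg_cong[where f=of_int] arg_cong2[where f="(mod)"])
    fix a :: "nat \<Rightarrow> nat"
    have 1: "(\<Sum>j = 1..N. - sgn1 j * (int (a j) + int (sshift M (J' j))))
        = - ((\<Sum>j = 1..N. sgn1 j * int (a j)) + (\<Sum>j = 1..N. sgn1 j * sh' j))"
    proof -
      have "(\<Sum>j = 1..N. - sgn1 j * (int (a j) + int (sshift M (J' j))))
          = (\<Sum>j = 1..N. - (sgn1 j * int (a j) + sgn1 j * sh' j))"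
        by (intro sum.cong) (simp_all add: sh'_def algebra_simps)
      also have "\<dots> = - (\<Sum>j = 1..N. (sgn1 j * int (a j) + sgn1 j * sh' j))"
        by (rule sum_negf)
      finally show ?thesis by (simp add: sum.distrib)
    qed
    have 2: "(\<Sum>j = 1..N. sgn1 j * int (a j)) = \<sigma> * int (a k) + (\<Sum>j\<in>{1..N}-{k}. sgn1 j * int (a j))"
      unfolding \<sigma>_def by (subst sum.remove[OF fin k]) simp
    have 3: "u a = (\<Sum>j\<in>{1..N}-{k}. sgn1 j * int (a j)) + (\<Sum>j\<in>{1..N}-{k}. sgn1 j * sh j)"
      unfolding u_def by (simp add: sum.distrib algebra_simps)
    show "(\<Sum>j = 1..N. - sgn1 j * (int (a j) + int (sshift M (J' j)))) = - ((\<sigma> * int (a k) + C) + u a)"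
      unfolding 1 2 3 C_def by simp
  qed
  have uk: "\<forall>a c. u (a(k := c)) = u a"
    unfolding u_def by (auto intro!: sum.cong)
  have pb: "(\<Sum>a\<in>outcomes_space N d. p x1 a * of_int ((\<sigma> * (int (a k) + sh k) + u a) mod int d))
       + (\<Sum>a\<in>outcomes_space N d. p x2 a * of_int ((- ((\<sigma> * int (a k) + C) + u a)) mod int d))
     \<ge> (\<Sum>a\<in>outcomes_space N d. p x1 a * of_int ((\<sigma> * (int (a k) + sh k) - t) mod int d))
       - (\<Sum>a\<in>outcomes_space N d. p x2 a * of_int ((\<sigma> * int (a k) + C - t) mod int d))"
    using pair_bound[OF ns pnn d k x1 x2 agree uk, where z="\<lambda>b. \<sigma> * (int b + sh k)" and z'="\<lambda>b. \<sigma> * int b + C" and t=t]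
    by simp
  have ip: "i \<ge> 1" unfolding i_def using Jp k by blast
  have rr_i: "nat ((int i - 1) mod int M + 1) = sidx M (J k)"
    using sidx_int[OF ip, of M] unfolding i_def by simp
  have ss_i: "(int i - 1) div int M = sh k"
    unfolding sh_def i_def using sshift_int[OF Jp[OF k]] by simp
  have T1: "(\<Sum>a\<in>outcomes_space N d. p x1 a * of_int ((\<sigma> * (int (a k) + sh k) - t) mod int d))
      = Vf N M d p k x t (int i)"
    unfolding Vf_def rr_i ss_i \<sigma>_def
  proof (rule ns_marg[OF ns d k x1, where F="\<lambda>b. of_int ((sgn1 k * (int b + sh k) - t) mod int d)"])
    show "x(k := sidx M (J k)) \<in> settings_space N M"
      using upd_in[OF x k sidx_range[OF Mp]] .
    show "x1 k = (x(k := sidx M (J k))) k" unfolding x1_def bracket_setting_def using k by simp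
  qed
  define r' where "r' = int (sidx M (J' k))"
  have r': "r' = (int i + \<sigma> - 1) mod int M + 1"
  proof -
    have "(int (J' k) - 1) mod int M = (int i + \<sigma> - 1) mod int M"
      using cong[OF k] unfolding i_def by (simp add: mod_eq_dvd_iff algebra_simps)
    then show ?thesis unfolding r'_def using sidx_int[OF J'p[OF k]] by simp
  qed
  have MC: "int M * C = 1 + \<sigma> * (int i - r')"
  proof -
    have a1: "int M * C = (\<Sum>j\<in>{1..N}. sgn1 j * (int (J' j) - int (sidx M (J' j))))
        - (\<Sum>j\<in>{1..N}-{k}. sgn1 j * (int (J j) - int (sidx M (J j))))"
    proof -
      have e1: "int M * (\<Sum>j\<in>{1..N}. sgn1 j * sh' j) = (\<Sum>j\<in>{1..N}. sgn1 j * (int (J' j) - int (sidx M (J' j))))"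
        unfolding sum_distrib_left
      proof (intro sum.cong refl)
        fix j assume "j \<in> {1..N}"
        then show "int M * (sgn1 j * sh' j) = sgn1 j * (int (J' j) - int (sidx M (J' j)))"
          unfolding sh'_def using shift_rel[OF J'p, of j M] by (metis mult.left_commute)
      qed
      have e2: "int M * (\<Sum>j\<in>{1..N}-{k}. sgn1 j * sh j) = (\<Sum>j\<in>{1..N}-{k}. sgn1 j * (int (J j) - int (sidx M (J j))))"
        unfolding sum_distrib_left
      proof (intro sum.cong refl)
        fix j assume "j \<in> {1..N}-{k}"
        then show "int M * (sgn1 j * sh j) = sgn1 j * (int (J j) - int (sidx M (J j)))"
          unfolding sh_def using shift_rel[OF Jp, of j M] by (metis mult.left_commute DiffD1)
      qed
      show ?thesis unfolding C_def right_diff_distrib e1 e2 ..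
    qed
    have L: "(\<Sum>j\<in>{1..N}. sgn1 j * int (J' j)) = (\<Sum>j\<in>{1..N}. sgn1 j * int (J j)) + 1"
      unfolding J'_def J_def using L2_rel[OF N, of \<beta>] L1_const[OF N a] L1_const[OF N b] by simp
    have s1: "(\<Sum>j\<in>{1..N}. sgn1 j * int (J j)) = \<sigma> * int i + (\<Sum>j\<in>{1..N}-{k}. sgn1 j * int (J j))"
      unfolding \<sigma>_def i_def by (subst sum.remove[OF fin k]) simp
    have s2: "(\<Sum>j\<in>{1..N}. sgn1 j * int (sidx M (J' j))) = \<sigma> * r' + (\<Sum>j\<in>{1..N}-{k}. sgn1 j * int (sidx M (J j)))"
      unfolding \<sigma>_def r'_def by (subst sum.remove[OF fin k]) (auto intro!: sum.cong simp: sidx_eq)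
    show ?thesis
      unfolding a1 right_diff_distrib sum_subtractf L s1 s2 by (simp add: algebra_simps)
  qed
  have C_eq: "C = \<sigma> * ((int i + \<sigma> - 1) div int M)"
  proof -
    have "int M * ((int i + \<sigma> - 1) div int M) = (int i + \<sigma> - 1) - (int i + \<sigma> - 1) mod int M"
      by (simp add: minus_mod_eq_mult_div)
    also have "\<dots> = int i + \<sigma> - r'" using r' by simp
    finally have "int M * (\<sigma> * ((int i + \<sigma> - 1) div int M)) = \<sigma> * (int i + \<sigma> - r')"
      by (metis mult.left_commute)
    also have "\<dots> = int M * C" unfolding MC using sgn1_sq[of k] unfolding \<sigma>_def by (simp add: algebra_simps)
    finally show ?thesis using Mp by simp
  qed
  have rr_i2: "nat ((int i + \<sigma> - 1) mod int M + 1) = sidx M (J' k)"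
    using r' unfolding r'_def by simp
  have T2: "(\<Sum>a\<in>outcomes_space N d. p x2 a * of_int ((\<sigma> * int (a k) + C - t) mod int d))
      = Vf N M d p k x t (int i + \<sigma>)"
  proof -
    define F where "F b = (of_int ((\<sigma> * (int b + ((int i + \<sigma> - 1) div int M)) - t) mod int d) :: real)" for b :: nat
    have "(\<Sum>a\<in>outcomes_space N d. p x2 a * of_int ((\<sigma> * int (a k) + C - t) mod int d))
        = (\<Sum>a\<in>outcomes_space N d. p x2 a * F (a k))"
      unfolding F_def C_eq by (intro sum.cong) (simp_all add: algebra_simps)
    also have "\<dots> = (\<Sum>a\<in>outcomes_space N d. p (x(k := sidx M (J' k))) a * F (a k))"
    proof (rule ns_marg[OF ns d k x2])
      show "x(k := sidx M (J' k)) \<in> settings_space N M"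
        using upd_in[OF x k sidx_range[OF Mp]] .
      show "x2 k = (x(k := sidx M (J' k))) k" unfolding x2_def bracket_setting_def using k by simp
    qed
    also have "\<dots> = Vf N M d p k x t (int i + \<sigma>)"
      unfolding Vf_def F_def rr_i2[symmetric] \<sigma>_def ..
    finally show ?thesis .
  qed
  show ?thesis
    using pb E1 E2 T1 T2 unfolding J_def J'_def \<beta>_def i_def \<sigma>_def by simp
qed

lemma Vf_shift:
  assumes Mp: "M > 0"
  shows "Vf N M d p k x (t + sgn1 k * q) (m + int M * q) = Vf N M d p k x t m"
proof -
  have 1: "(m + int M * q - 1) mod int M = (m - 1) mod int M"
    by (metis add.commute add_diff_eq mod_mult_self2 mult.commute)
  have 2: "(m + int M * q - 1) div int M = (m - 1) div int M + q"
  proof -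
    have "(m + int M * q - 1) = (m - 1) + q * int M" by (simp add: algebra_simps)
    moreover have "(m - 1 + q * int M) div int M = q + (m-1) div int M"
      by (rule div_mult_self1) (use Mp in simp)
    ultimately show ?thesis by (metis add.commute)
  qed
  show ?thesis unfolding Vf_def 1 2 by (simp add: algebra_simps)
qed

lemma window_periodic:
  fixes G :: "nat \<Rightarrow> real"
  assumes per: "\<And>i. i \<ge> 1 \<Longrightarrow> G (i + M) = G i" and c: "c \<ge> 1"
  shows "(\<Sum>n<M. G (c + n)) = (\<Sum>n<M. G (1 + n))"
  using c
proof (induction c rule: dec_induct)
  case base
  then show ?case by simp
next
  case (step c)
  have "(\<Sum>n<Suc M. G (c + n)) = G c + (\<Sum>n<M. G (c + Suc n))"
    by (subst sum.lessThan_Suc_shift) simp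
  moreover have "(\<Sum>n<Suc M. G (c + n)) = (\<Sum>n<M. G (c + n)) + G (c + M)"
    by simp
  moreover have "G (c + M) = G c" using per step.hyps by simp
  ultimately have "(\<Sum>n<M. G (Suc c + n)) = (\<Sum>n<M. G (c + n))" by simp
  then show ?case using step.IH by simp
qed

lemma counting:
  fixes G :: "nat \<Rightarrow> real"
  assumes N: "N \<ge> 2" and M: "M \<ge> 1" and k: "k \<in> {1..N}"
    and per: "\<And>i. i \<ge> 1 \<Longrightarrow> G (i + M) = G i"
  shows "(\<Sum>\<alpha>\<in>alpha_space N M. G (J1 N \<alpha> k)) = real M ^ (N - 2) * (\<Sum>n<M. G (1 + n))"
proof -
  define \<kappa> where "\<kappa> = (if k \<le> N - 1 then k else N - 1)"
  define R where "R = {1..N-1} - {\<kappa>}"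
  have \<kappa>: "\<kappa> \<in> {1..N-1}" unfolding \<kappa>_def using k N by auto
  have AS: "alpha_space N M = PiE (insert \<kappa> R) (\<lambda>_. {1..M})"
    unfolding alpha_space_def R_def using \<kappa> by (simp add: insert_absorb)
  define c where "c h = (if 2 \<le> k \<and> k \<le> N - 1 then h (k - 1) else 1)" for h :: "nat \<Rightarrow> nat"
  have inner: "(\<Sum>v\<in>{1..M}. G (J1 N (h(\<kappa> := v)) k)) = (\<Sum>n<M. G (1 + n))"
    if h: "h \<in> PiE R (\<lambda>_. {1..M})" for h
  proof -
    have cpos: "c h \<ge> 1"
    proof (cases "2 \<le> k \<and> k \<le> N - 1")
      case True
      then have "k - 1 \<in> R" unfolding R_def \<kappa>_def by auto
      then show ?thesis using h unfolding c_def using True by auto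
    qed (auto simp: c_def)
    have J: "J1 N (h(\<kappa> := v)) k = c h + v - 1" if v: "v \<in> {1..M}" for v
    proof -
      consider "k = 1" | "k = N" "k \<noteq> 1" | "2 \<le> k" "k \<le> N - 1" using k by force
      then show ?thesis
      proof cases
        case 1
        then show ?thesis using N v unfolding J1_def c_def \<kappa>_def by auto
      next
        case 2
        then show ?thesis using N v unfolding J1_def c_def \<kappa>_def by auto
      next
        case 3
        then show ?thesis using N v unfolding J1_def c_def \<kappa>_def by auto
      qed
    qed
    have "(\<Sum>v\<in>{1..M}. G (J1 N (h(\<kappa> := v)) k)) = (\<Sum>v\<in>{1..M}. G (c h + v - 1))"
      using J by (intro sum.cong) auto
    also have "\<dots> = (\<Sum>n<M. G (c h + n))"
      by (simp add: sum.atLeast1_atMost_eq)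
    also have "\<dots> = (\<Sum>n<M. G (1 + n))" by (rule window_periodic[where G=G and M=M, OF per cpos])
    finally show ?thesis .
  qed
  have "(\<Sum>\<alpha>\<in>alpha_space N M. G (J1 N \<alpha> k)) = (\<Sum>h\<in>PiE R (\<lambda>_. {1..M}). \<Sum>v\<in>{1..M}. G (J1 N (h(\<kappa> := v)) k))"
    unfolding AS by (rule sum_PiE_insert) (auto simp: R_def)
  also have "\<dots> = (\<Sum>h\<in>PiE R (\<lambda>_. {1..M}). (\<Sum>n<M. G (1 + n)))"
    by (rule sum.cong[OF refl]) (erule inner)
  also have "\<dots> = real (card (PiE R (\<lambda>_. {1..M}))) * (\<Sum>n<M. G (1 + n))" by simp
  also have "card (PiE R (\<lambda>_. {1..M})) = M ^ (N - 2)"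
  proof -
    have "card R = N - 2" unfolding R_def using \<kappa> by (simp add: card_Diff_singleton)
    then show ?thesis by (simp add: card_PiE R_def)
  qed
  finally show ?thesis by simp
qed

lemma mod_zero_iff_eq:
  assumes "a < d" "s < d"
  shows "((int a - int s) mod int d = 0) \<longleftrightarrow> a = s"
proof
  assume h: "(int a - int s) mod int d = 0"
  show "a = s"
  proof (rule ccontr)
    assume "a \<noteq> s"
    then have ne: "int a - int s \<noteq> 0" by simp
    have "int d dvd (int a - int s)" using h by (simp add: mod_eq_0_iff_dvd)
    from dvd_imp_le_int[OF ne this] assms show False by auto
  qed
qed simp

lemma marg_combo:
  assumes k: "k \<in> {1..N}" and s: "s < d" and psum: "(\<Sum>a\<in>outcomes_space N d. p x a) = 1"
  shows "(\<Sum>a\<in>outcomes_space N d. p x a * (if a k = s then real d - 1 else -1)) = real d * marginal N d p x k s - 1"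
proof -
  have tot: "(\<Sum>b<d. marginal N d p x k b) = 1"
    using sum_marg[OF k, of p x "\<lambda>_. 1" d] psum by simp
  have "(\<Sum>a\<in>outcomes_space N d. p x a * (if a k = s then real d - 1 else -1))
      = (\<Sum>b<d. (if b = s then real d - 1 else -1) * marginal N d p x k b)"
    by (rule sum_marg[OF k])
  also have "\<dots> = (\<Sum>b<d. (if b = s then real d * marginal N d p x k b else 0) - marginal N d p x k b)"
    by (intro sum.cong) (auto simp: algebra_simps)
  also have "\<dots> = real d * marginal N d p x k s - 1"
    using s by (simp add: sum_subtractf tot)
  finally show ?thesis .
qed

lemma single_box:
  assumes N: "N \<ge> 2" and M: "M \<ge> 1" and d: "d > 0" and ns: "nonsignalling N M d p"
    and pnn: "\<forall>x\<in>settings_space N M. \<forall>a\<in>outcomes_space N d. p x a \<ge> 0"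
    and psum: "\<forall>x\<in>settings_space N M. (\<Sum>a\<in>outcomes_space N d. p x a) = 1"
    and k: "k \<in> {1..N}" and x: "x \<in> settings_space N M" and s: "s < d"
  shows "real d * marginal N d p x k s - 1 \<le> bell_I N M d p"
proof -
  have Mp: "M > 0" using M by simp
  define \<sigma> where "\<sigma> = sgn1 k"
  have \<sigma>: "\<sigma> = 1 \<or> \<sigma> = -1" unfolding \<sigma>_def sgn1_def by (simp add: minus_one_power_iff)
  define \<gamma> where "\<gamma> = x k"
  have \<gamma>: "\<gamma> \<in> {1..M}" using x k unfolding \<gamma>_def settings_space_def by auto
  define w0 where "w0 = (if \<sigma> = 1 then int \<gamma> else int \<gamma> + 1)"
  define t0 where "t0 = (if \<sigma> = 1 then int s + 1 else - int s)"
  define q where "q m = (m - w0) div int M" for m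
  define V where "V = Vf N M d p k x"
  define f where "f m = V (t0 + \<sigma> * q m) m - V (t0 + \<sigma> * q m) (m + \<sigma>)" for m
  define G where "G n = f (int n)" for n
  define E1 where "E1 \<alpha> = bracket_exp N M d p (J1 N \<alpha>) sgn1" for \<alpha>
  define E2 where "E2 \<alpha> = bracket_exp N M d p (J2 N \<alpha>) (\<lambda>k. - sgn1 k)" for \<alpha>
  have A: "E1 \<alpha> + E2 (phi N M k \<alpha>) \<ge> G (J1 N \<alpha> k)" if a: "\<alpha> \<in> alpha_space N M" for \<alpha>
    unfolding E1_def E2_def G_def f_def V_def \<sigma>_def
    by (rule pair_alpha[OF N M d ns pnn k x a])
  have Vs: "V (t + \<sigma> * 1) (m + int M * 1) = V t m" for t m
    unfolding V_def \<sigma>_def by (rule Vf_shift[OF Mp])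
  have per: "G (i + M) = G i" for i
  proof -
    have qM: "q (int i + int M) = q (int i) + 1"
    proof -
      have "(int i - w0 + 1 * int M) div int M = 1 + (int i - w0) div int M"
        by (rule div_mult_self1) (use Mp in simp)
      then show ?thesis unfolding q_def by (simp add: algebra_simps)
    qed
    have "G (i + M) = f (int i + int M)" by (simp add: G_def)
    also have "\<dots> = V (t0 + \<sigma> * q (int i) + \<sigma> * 1) (int i + int M * 1)
        - V (t0 + \<sigma> * q (int i) + \<sigma> * 1) ((int i + \<sigma>) + int M * 1)"
      unfolding f_def qM by (simp add: algebra_simps)
    also have "\<dots> = G i" unfolding Vs G_def f_def ..
    finally show ?thesis .
  qed
  have w0: "w0 \<ge> 1" unfolding w0_def using \<gamma> by auto
  have V0: "V t0 (int \<gamma>) = (\<Sum>a\<in>outcomes_space N d. p x a * of_int ((\<sigma> * int (a k) - t0) mod int d))"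
  proof -
    have "(int \<gamma> - 1) mod int M = int \<gamma> - 1" "(int \<gamma> - 1) div int M = 0" using \<gamma> by auto
    moreover have "x(k := \<gamma>) = x" unfolding \<gamma>_def by simp
    ultimately show ?thesis unfolding V_def Vf_def \<sigma>_def by simp
  qed
  have V1: "V t0 (int \<gamma> + int M) = (\<Sum>a\<in>outcomes_space N d. p x a * of_int ((\<sigma> * (int (a k) + 1) - t0) mod int d))"
  proof -
    have "(int \<gamma> + int M - 1) mod int M = int \<gamma> - 1"
    proof -
      have "(int \<gamma> - 1 + 1 * int M) mod int M = (int \<gamma> - 1) mod int M" by (rule mod_mult_self1)
      then show ?thesis using \<gamma> by (simp add: algebra_simps)
    qed
    moreover have "(int \<gamma> + int M - 1) div int M = 1"
    proof -
      have "(int \<gamma> - 1 + 1 * int M) div int M = 1 + (int \<gamma> - 1) div int M"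
        by (rule div_mult_self1) (use Mp in simp)
      then show ?thesis using \<gamma> by (simp add: algebra_simps)
    qed
    moreover have "x(k := \<gamma>) = x" unfolding \<gamma>_def by simp
    ultimately show ?thesis unfolding V_def Vf_def \<sigma>_def by simp
  qed
  have C: "(\<Sum>n<M. G (nat w0 + n)) = real d * marginal N d p x k s - 1"
  proof -
    have Gn: "G (nat w0 + n) = V t0 (w0 + int n) - V t0 (w0 + int n + \<sigma>)" if "n < M" for n
    proof -
      have "q (int (nat w0 + n)) = 0" unfolding q_def using w0 that by simp
      then show ?thesis unfolding G_def f_def using w0 by simp
    qed
    have pt: "(int a - int s - 1) mod int d - (int a - int s) mod int d = (if a = s then int d - 1 else -1)"
      if "a < d" for a
      using mod_pred_diff[of "int d" "int a - int s"] d mod_zero_iff_eq[OF that s] by simp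
    have pt2: "(int s - int a - 1) mod int d - (int s - int a) mod int d = (if a = s then int d - 1 else -1)"
      if "a < d" for a
      using mod_pred_diff[of "int d" "int s - int a"] d mod_zero_iff_eq[OF s that] by auto
    have ak: "a k < d" if "a \<in> outcomes_space N d" for a
      using that k unfolding outcomes_space_def by auto
    have "(\<Sum>n<M. G (nat w0 + n)) = (\<Sum>a\<in>outcomes_space N d. p x a * (if a k = s then real d - 1 else -1))"
    proof (cases "\<sigma> = 1")
      case True
      have "(\<Sum>n<M. G (nat w0 + n)) = (\<Sum>n<M. V t0 (w0 + int n) - V t0 (w0 + int (Suc n)))"
        using Gn True by (intro sum.cong) (auto simp: algebra_simps)
      also have "\<dots> = V t0 (w0 + int 0) - V t0 (w0 + int M)"
        by (rule sum_lessThan_telescope')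
      also have "\<dots> = V t0 (int \<gamma>) - V t0 (int \<gamma> + int M)" using True unfolding w0_def by simp
      also have "\<dots> = (\<Sum>a\<in>outcomes_space N d. p x a * (if a k = s then real d - 1 else -1))"
        unfolding V0 V1 sum_subtractf[symmetric] right_diff_distrib[symmetric]
      proof (intro sum.cong refl)
        fix a assume a: "a \<in> outcomes_space N d"
        have "(\<sigma> * int (a k) - t0) mod int d - (\<sigma> * (int (a k) + 1) - t0) mod int d = (if a k = s then int d - 1 else -1)"
          using pt[OF ak[OF a]] True unfolding t0_def by (simp add: algebra_simps)
        then show "p x a * (of_int ((\<sigma> * int (a k) - t0) mod int d) - of_int ((\<sigma> * (int (a k) + 1) - t0) mod int d))
          = p x a * (if a k = s then real d - 1 else -1)"
          by (simp only: of_int_diff[symmetric]) (simp split: if_splits)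
      qed
      finally show ?thesis .
    next
      case False
      then have s1: "\<sigma> = -1" using \<sigma> by simp
      have "(\<Sum>n<M. G (nat w0 + n)) = (\<Sum>n<M. V t0 (int \<gamma> + int (Suc n)) - V t0 (int \<gamma> + int n))"
        using Gn s1 unfolding w0_def by (intro sum.cong) (auto simp: algebra_simps)
      also have "\<dots> = V t0 (int \<gamma> + int M) - V t0 (int \<gamma> + int 0)"
        by (rule sum_lessThan_telescope)
      also have "\<dots> = V t0 (int \<gamma> + int M) - V t0 (int \<gamma>)" by simp
      also have "\<dots> = (\<Sum>a\<in>outcomes_space N d. p x a * (if a k = s then real d - 1 else -1))"
        unfolding V0 V1 sum_subtractf[symmetric] right_diff_distrib[symmetric]
      proof (intro sum.cong refl)
        fix a assume a: "a \<in> outcomes_space N d"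
        have "(\<sigma> * (int (a k) + 1) - t0) mod int d - (\<sigma> * int (a k) - t0) mod int d = (if a k = s then int d - 1 else -1)"
          using pt2[OF ak[OF a]] s1 unfolding t0_def by (simp add: algebra_simps)
        then show "p x a * (of_int ((\<sigma> * (int (a k) + 1) - t0) mod int d) - of_int ((\<sigma> * int (a k) - t0) mod int d))
          = p x a * (if a k = s then real d - 1 else -1)"
          by (simp only: of_int_diff[symmetric]) (simp split: if_splits)
      qed
      finally show ?thesis .
    qed
    also have "\<dots> = real d * marginal N d p x k s - 1"
      using marg_combo[OF k s] psum x by simp
    finally show ?thesis .
  qed
  have bij: "bij_betw (phi N M k) (alpha_space N M) (alpha_space N M)" by (rule phi_bij[OF M])
  have "(\<Sum>\<alpha>\<in>alpha_space N M. E1 \<alpha> + E2 \<alpha>) = (\<Sum>\<alpha>\<in>alpha_space N M. E1 \<alpha>) + (\<Sum>\<alpha>\<in>alpha_space N M. E2 \<alpha>)"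
    by (simp add: sum.distrib)
  also have "(\<Sum>\<alpha>\<in>alpha_space N M. E2 \<alpha>) = (\<Sum>\<alpha>\<in>alpha_space N M. E2 (phi N M k \<alpha>))"
    by (rule sum.reindex_bij_betw[OF bij, symmetric])
  also have "(\<Sum>\<alpha>\<in>alpha_space N M. E1 \<alpha>) + \<dots> = (\<Sum>\<alpha>\<in>alpha_space N M. E1 \<alpha> + E2 (phi N M k \<alpha>))"
    by (simp add: sum.distrib)
  finally have S: "(\<Sum>\<alpha>\<in>alpha_space N M. E1 \<alpha> + E2 \<alpha>) \<ge> (\<Sum>\<alpha>\<in>alpha_space N M. G (J1 N \<alpha> k))"
    using A by (simp add: sum_mono)
  have cnt: "(\<Sum>\<alpha>\<in>alpha_space N M. G (J1 N \<alpha> k)) = real M ^ (N - 2) * (\<Sum>n<M. G (1 + n))"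
    by (rule counting[OF N M k]) (rule per)
  have win: "(\<Sum>n<M. G (nat w0 + n)) = (\<Sum>n<M. G (1 + n))"
    by (rule window_periodic[where G=G and M=M]) (use per w0 in auto)
  have pos: "real M ^ (N - 2) > 0" using Mp by simp
  have "bell_I N M d p = (1 / real M ^ (N - 2)) * (\<Sum>\<alpha>\<in>alpha_space N M. E1 \<alpha> + E2 \<alpha>)"
    unfolding bell_I_def E1_def E2_def ..
  also have "\<dots> \<ge> (1 / real M ^ (N - 2)) * (real M ^ (N - 2) * (real d * marginal N d p x k s - 1))"
    using S cnt win C pos by (intro mult_left_mono) auto
  finally show ?thesis using pos Mp by simp
qed

lemma tv_bound:
  fixes \<mu> :: "nat \<Rightarrow> real"
  assumes d: "d > 0" and tot: "(\<Sum>b<d. \<mu> b) = 1"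
    and bd: "\<forall>s<d. real d * \<mu> s - 1 \<le> I"
  shows "I \<ge> 0" "(\<Sum>b<d. \<bar>\<mu> b - 1 / real d\<bar>) \<le> 2 * ((real d - 1) / real d) * I"
proof -
  have dp: "real d > 0" using d by simp
  have ex0: "\<exists>b0<d. \<mu> b0 \<le> 1 / real d"
  proof (rule ccontr)
    assume "\<not> ?thesis"
    then have "\<forall>b\<in>{..<d}. 1 / real d < \<mu> b" by auto
    then have "(\<Sum>b<d. 1 / real d) < (\<Sum>b<d. \<mu> b)" using d by (intro sum_strict_mono) auto
    then show False using tot dp by simp
  qed
  have ex1: "\<exists>b1<d. \<mu> b1 \<ge> 1 / real d"
  proof (rule ccontr)
    assume "\<not> ?thesis"
    then have "\<forall>b\<in>{..<d}. \<mu> b < 1 / real d" by auto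
    then have "(\<Sum>b<d. \<mu> b) < (\<Sum>b<d. 1 / real d)" using d by (intro sum_strict_mono) auto
    then show False using tot dp by simp
  qed
  then obtain b1 where b1: "b1 < d" "\<mu> b1 \<ge> 1 / real d" by blast
  have "real d * \<mu> b1 \<ge> 1" using b1(2) dp by (simp add: field_simps)
  then show I0: "I \<ge> 0" using bd b1(1) by force
  obtain b0 where b0: "b0 < d" "\<mu> b0 \<le> 1 / real d" using ex0 by blast
  have absr: "\<bar>y\<bar> = 2 * max y 0 - y" for y :: real by auto
  have "(\<Sum>b<d. \<bar>\<mu> b - 1 / real d\<bar>) = 2 * (\<Sum>b<d. max (\<mu> b - 1 / real d) 0) - (\<Sum>b<d. \<mu> b - 1 / real d)"
    unfolding absr by (simp add: sum_subtractf sum_distrib_left)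
  also have "(\<Sum>b<d. \<mu> b - 1 / real d) = 0" using tot dp by (simp add: sum_subtractf)
  also have "(\<Sum>b<d. max (\<mu> b - 1 / real d) 0) = (\<Sum>b\<in>{..<d} - {b0}. max (\<mu> b - 1 / real d) 0)"
    using b0 by (subst sum.remove[of _ b0]) auto
  also have "\<dots> \<le> (\<Sum>b\<in>{..<d} - {b0}. I / real d)"
  proof (rule sum_mono)
    fix b assume "b \<in> {..<d} - {b0}"
    then have "real d * \<mu> b - 1 \<le> I" using bd by auto
    then have "(real d * \<mu> b - 1) / real d \<le> I / real d" using dp by (intro divide_right_mono) auto
    then have "\<mu> b - 1 / real d \<le> I / real d" using dp by (simp add: diff_divide_distrib)
    moreover have "0 \<le> I / real d" using I0 dp by simp
    ultimately show "max (\<mu> b - 1 / real d) 0 \<le> I / real d" by simp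
  qed
  also have "\<dots> = (real d - 1) * (I / real d)" using b0 d by (simp add: card_Diff_singleton of_nat_diff)
  finally have "(\<Sum>b<d. \<bar>\<mu> b - 1 / real d\<bar>) \<le> 2 * ((real d - 1) * (I / real d))" by simp
  then show "(\<Sum>b<d. \<bar>\<mu> b - 1 / real d\<bar>) \<le> 2 * ((real d - 1) / real d) * I" by (simp add: field_simps)
qed

lemma bracket_obs:
  "bracket_exp N M d (observed W pw pxw P) J \<sigma> =
     (\<Sum>w\<in>W. p_w_given_x W pw pxw w (bracket_setting N M J) * bracket_exp N M d (P w) J \<sigma>)"
  unfolding bracket_exp_def observed_def
  unfolding sum_distrib_left sum_distrib_right mult.assoc by (rule sum.swap)

lemma bracket_nonneg:
  assumes "d > 0" "M > 0" "\<forall>x\<in>settings_space N M. \<forall>a\<in>outcomes_space N d. p x a \<ge> 0"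
  shows "bracket_exp N M d p J \<sigma> \<ge> 0"
  unfolding bracket_exp_def using assms bracket_setting_in[OF assms(2)]
  by (intro sum_nonneg mult_nonneg_nonneg) auto

theorem theorem5:
  fixes N M d :: nat
    and W :: "'w set"
    and pw :: "'w \<Rightarrow> real"
    and pxw :: "'w \<Rightarrow> (nat \<Rightarrow> nat) \<Rightarrow> real"
    and P :: "'w \<Rightarrow> (nat \<Rightarrow> nat) \<Rightarrow> (nat \<Rightarrow> nat) \<Rightarrow> real"
  assumes N: "N \<ge> 2" and M: "M \<ge> 2" and d: "d \<ge> 2"
    and W_fin: "finite W" and W_ne: "W \<noteq> {}"
    and pw_nonneg: "\<forall>w\<in>W. pw w \<ge> 0"
    and pw_sum: "(\<Sum>w\<in>W. pw w) = 1"
    and pxw_nonneg: "\<forall>w\<in>W. \<forall>x\<in>settings_space N M. pxw w x \<ge> 0"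
    and pxw_sum: "\<forall>w\<in>W. (\<Sum>x\<in>settings_space N M. pxw w x) = 1"
    and px_equal: "\<forall>x\<in>settings_space N M. \<forall>y\<in>settings_space N M. p_x W pw pxw x = p_x W pw pxw y"
    and P_nonneg: "\<forall>w\<in>W. \<forall>x\<in>settings_space N M. \<forall>a\<in>outcomes_space N d. P w x a \<ge> 0"
    and P_sum: "\<forall>w\<in>W. \<forall>x\<in>settings_space N M. (\<Sum>a\<in>outcomes_space N d. P w x a) = 1"
    and P_ns: "\<forall>w\<in>W. nonsignalling N M d (P w)"
    and pmin_pos: "\<forall>w\<in>W. p_tilde_min N M pxw w > 0"
  shows "\<forall>k\<in>{1..N}. \<forall>x\<in>settings_space N M.
    (1/2) * (\<Sum>b<d. \<Sum>w\<in>W.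
        \<bar>p_w_given_x W pw pxw w x * marginal N d (P w) x k b - (1 / real d) * p_w_given_x W pw pxw w x\<bar>)
    \<le> ((real (d - 1))^2 + 1) / (2 * real d) * Q_tilde N M W pxw x * bell_I N M d (observed W pw pxw P)"
proof (intro ballI)
  fix k x assume k: "k \<in> {1..N}" and x: "x \<in> settings_space N M"
  have Mp: "M > 0" and M1: "M \<ge> 1" and dp: "d > 0" using M d by auto
  have rdp: "real d > 0" using dp by simp
  define c where "c = p_x W pw pxw x"
  have pxc: "p_x W pw pxw y = c" if "y \<in> settings_space N M" for y
    using px_equal[rule_format, OF that x] unfolding c_def by simp
  have totx: "(\<Sum>y\<in>settings_space N M. p_x W pw pxw y) = 1"
  proof -
    have "(\<Sum>y\<in>settings_space N M. p_x W pw pxw y) = (\<Sum>w\<in>W. pw w * (\<Sum>y\<in>settings_space N M. pxw w y))"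
      unfolding p_x_def sum_distrib_left by (rule sum.swap)
    also have "\<dots> = (\<Sum>w\<in>W. pw w)" using pxw_sum by simp
    finally show ?thesis using pw_sum by simp
  qed
  have cpos: "c > 0"
  proof -
    have "(\<Sum>y\<in>settings_space N M. p_x W pw pxw y) = real (card (settings_space N M)) * c"
      using pxc by simp
    then have "real (card (settings_space N M)) * c = 1" using totx by simp
    moreover have "c \<ge> 0" unfolding c_def p_x_def using pw_nonneg pxw_nonneg x
      by (intro sum_nonneg mult_nonneg_nonneg) auto
    ultimately show ?thesis by (cases "c = 0") auto
  qed
  define q where "q w = p_w_given_x W pw pxw w x" for w
  have q: "q w = pxw w x * pw w / c" for w unfolding q_def p_w_given_x_def c_def ..
  have qnn: "q w \<ge> 0" if "w \<in> W" for w
    unfolding q using that pw_nonneg pxw_nonneg x cpos by auto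
  define I where "I w = bell_I N M d (P w)" for w
  define \<mu> where "\<mu> w b = marginal N d (P w) x k b" for w b
  define K where "K = ((real (d - 1))^2 + 1) / (2 * real d)"
  define Q where "Q = Q_tilde N M W pxw x"
  define r where "r w = p_tilde_min N M pxw w * pw w / c" for w
  have tv: "I w \<ge> 0 \<and> (\<Sum>b<d. \<bar>\<mu> w b - 1 / real d\<bar>) \<le> 2 * ((real d - 1) / real d) * I w" if w: "w \<in> W" for w
  proof -
    have ns: "nonsignalling N M d (P w)" using P_ns w by auto
    have pnn: "\<forall>x\<in>settings_space N M. \<forall>a\<in>outcomes_space N d. P w x a \<ge> 0" using P_nonneg w by auto
    have ps: "\<forall>x\<in>settings_space N M. (\<Sum>a\<in>outcomes_space N d. P w x a) = 1" using P_sum w by auto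
    have tot: "(\<Sum>b<d. \<mu> w b) = 1"
      using sum_marg[OF k, of "P w" x "\<lambda>_. 1" d] ps x unfolding \<mu>_def by simp
    have bd: "\<forall>s<d. real d * \<mu> w s - 1 \<le> I w"
      unfolding \<mu>_def I_def using single_box[OF N M1 dp ns pnn ps k x] by auto
    show ?thesis using tv_bound[OF dp tot bd] by auto
  qed
  have Knn: "(real d - 1) / real d \<le> K"
  proof -
    have "real (d - 1) = real d - 1" using dp by (simp add: of_nat_diff)
    moreover have "2 * (real d - 1) \<le> (real d - 1)^2 + 1"
    proof -
      have "(real d - 1)^2 + 1 - 2 * (real d - 1) = (real d - 2)^2" by (simp add: power2_eq_square algebra_simps)
      moreover have "(real d - 2)^2 \<ge> 0" by simp
      ultimately show ?thesis by linarith
    qed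
    moreover have "(real d - 1)/real d = (2*(real d - 1))/(2*real d)"
      by (metis mult_divide_mult_cancel_left_if zero_neq_numeral)
    ultimately show ?thesis unfolding K_def using rdp by (simp add: divide_right_mono)
  qed
  have Qb: "pxw w x \<le> Q * p_tilde_min N M pxw w" if w: "w \<in> W" for w
  proof -
    have "pxw w x / p_tilde_min N M pxw w \<le> Q"
      unfolding Q_def Q_tilde_def using W_fin w by (intro Max_ge) auto
    then show ?thesis using pmin_pos w by (simp add: divide_le_eq)
  qed
  have Q0: "Q \<ge> 0"
  proof -
    obtain w where w: "w \<in> W" using W_ne by blast
    have "0 \<le> pxw w x / p_tilde_min N M pxw w" using pxw_nonneg pmin_pos w x by auto
    also have "\<dots> \<le> Q" unfolding Q_def Q_tilde_def using W_fin w by (intro Max_ge) auto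
    finally show ?thesis .
  qed
  have qr: "q w \<le> Q * r w" if w: "w \<in> W" for w
  proof -
    have "pxw w x * pw w \<le> Q * p_tilde_min N M pxw w * pw w"
      using Qb[OF w] pw_nonneg w by (intro mult_right_mono) auto
    then show ?thesis unfolding q r_def using cpos by (simp add: divide_right_mono mult.assoc)
  qed
  have fin_app: "finite (settings_appearing N M)"
    unfolding settings_appearing_def using finite_alpha by simp
  have rle: "r w \<le> p_w_given_x W pw pxw w (bracket_setting N M J)"
    if w: "w \<in> W" and J: "bracket_setting N M J \<in> settings_appearing N M" for w J
  proof -
    have Js: "bracket_setting N M J \<in> settings_space N M" using bracket_setting_in[OF Mp] .
    have "p_tilde_min N M pxw w \<le> pxw w (bracket_setting N M J)"
      unfolding p_tilde_min_def using fin_app J by (intro Min_le) auto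
    then have "p_tilde_min N M pxw w * pw w \<le> pxw w (bracket_setting N M J) * pw w"
      using pw_nonneg w by (intro mult_right_mono) auto
    then show ?thesis unfolding r_def p_w_given_x_def using pxc[OF Js] cpos by (simp add: divide_right_mono)
  qed
  have rnn: "r w \<ge> 0" if "w \<in> W" for w
    unfolding r_def using that pmin_pos pw_nonneg cpos by auto
  have brl: "bracket_exp N M d (observed W pw pxw P) J \<sigma> \<ge> (\<Sum>w\<in>W. r w * bracket_exp N M d (P w) J \<sigma>)"
    if J: "bracket_setting N M J \<in> settings_appearing N M" for J \<sigma>
    unfolding bracket_obs
  proof (rule sum_mono)
    fix w assume w: "w \<in> W"
    have "bracket_exp N M d (P w) J \<sigma> \<ge> 0"
      using bracket_nonneg[OF dp Mp] P_nonneg w by auto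
    then show "r w * bracket_exp N M d (P w) J \<sigma> \<le> p_w_given_x W pw pxw w (bracket_setting N M J) * bracket_exp N M d (P w) J \<sigma>"
      using rle[OF w J] by (intro mult_right_mono) auto
  qed
  have obs: "bell_I N M d (observed W pw pxw P) \<ge> (\<Sum>w\<in>W. r w * I w)"
  proof -
    have "(\<Sum>w\<in>W. r w * I w) = (1 / real M ^ (N - 2)) * (\<Sum>\<alpha>\<in>alpha_space N M.
        (\<Sum>w\<in>W. r w * bracket_exp N M d (P w) (J1 N \<alpha>) sgn1) + (\<Sum>w\<in>W. r w * bracket_exp N M d (P w) (J2 N \<alpha>) (\<lambda>k. - sgn1 k)))"
    proof -
      define c0 where "c0 = 1 / real M ^ (N - 2)"
      define e1 where "e1 w \<alpha> = bracket_exp N M d (P w) (J1 N \<alpha>) sgn1" for w \<alpha>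
      define e2 where "e2 w \<alpha> = bracket_exp N M d (P w) (J2 N \<alpha>) (\<lambda>k. - sgn1 k)" for w \<alpha>
      have "(\<Sum>w\<in>W. r w * I w) = (\<Sum>w\<in>W. c0 * (\<Sum>\<alpha>\<in>alpha_space N M. r w * e1 w \<alpha> + r w * e2 w \<alpha>))"
        unfolding I_def bell_I_def c0_def e1_def e2_def
        by (intro sum.cong refl) (simp add: sum_distrib_left distrib_left mult.left_commute)
      also have "\<dots> = c0 * (\<Sum>w\<in>W. \<Sum>\<alpha>\<in>alpha_space N M. r w * e1 w \<alpha> + r w * e2 w \<alpha>)"
        by (simp add: sum_distrib_left)
      also have "(\<Sum>w\<in>W. \<Sum>\<alpha>\<in>alpha_space N M. r w * e1 w \<alpha> + r w * e2 w \<alpha>)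
          = (\<Sum>\<alpha>\<in>alpha_space N M. \<Sum>w\<in>W. r w * e1 w \<alpha> + r w * e2 w \<alpha>)"
        by (rule sum.swap)
      also have "\<dots> = (\<Sum>\<alpha>\<in>alpha_space N M. (\<Sum>w\<in>W. r w * e1 w \<alpha>) + (\<Sum>w\<in>W. r w * e2 w \<alpha>))"
        by (simp add: sum.distrib)
      finally show ?thesis unfolding c0_def e1_def e2_def .
    qed
    also have "\<dots> \<le> bell_I N M d (observed W pw pxw P)"
      unfolding bell_I_def
    proof (intro mult_left_mono sum_mono add_mono)
      fix \<alpha> assume a: "\<alpha> \<in> alpha_space N M"
      show "(\<Sum>w\<in>W. r w * bracket_exp N M d (P w) (J1 N \<alpha>) sgn1) \<le> bracket_exp N M d (observed W pw pxw P) (J1 N \<alpha>) sgn1"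
        by (rule brl) (use a in \<open>auto simp: settings_appearing_def\<close>)
      show "(\<Sum>w\<in>W. r w * bracket_exp N M d (P w) (J2 N \<alpha>) (\<lambda>k. - sgn1 k)) \<le> bracket_exp N M d (observed W pw pxw P) (J2 N \<alpha>) (\<lambda>k. - sgn1 k)"
        by (rule brl) (use a in \<open>auto simp: settings_appearing_def\<close>)
    qed simp
    finally show ?thesis .
  qed
  have "(1/2) * (\<Sum>b<d. \<Sum>w\<in>W. \<bar>p_w_given_x W pw pxw w x * marginal N d (P w) x k b - (1 / real d) * p_w_given_x W pw pxw w x\<bar>)
      = (\<Sum>w\<in>W. q w * ((1/2) * (\<Sum>b<d. \<bar>\<mu> w b - 1 / real d\<bar>)))"
  proof -
    have "(\<Sum>b<d. \<Sum>w\<in>W. \<bar>p_w_given_x W pw pxw w x * marginal N d (P w) x k b - (1 / real d) * p_w_given_x W pw pxw w x\<bar>)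
       = (\<Sum>w\<in>W. \<Sum>b<d. q w * \<bar>\<mu> w b - 1 / real d\<bar>)"
      unfolding q_def[symmetric] \<mu>_def[symmetric]
    proof (subst sum.swap, intro sum.cong refl)
      fix w b assume w: "w \<in> W"
      have "q w * \<mu> w b - 1 / real d * q w = q w * (\<mu> w b - 1 / real d)" by (simp add: algebra_simps)
      then show "\<bar>q w * \<mu> w b - 1 / real d * q w\<bar> = q w * \<bar>\<mu> w b - 1 / real d\<bar>"
        using qnn[OF w] by (simp add: abs_mult)
    qed
    then show ?thesis by (simp add: sum_distrib_left mult_ac)
  qed
  also have "\<dots> \<le> (\<Sum>w\<in>W. q w * (K * I w))"
  proof (rule sum_mono)
    fix w assume w: "w \<in> W"
    have "(1/2) * (\<Sum>b<d. \<bar>\<mu> w b - 1 / real d\<bar>) \<le> ((real d - 1) / real d) * I w"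
    proof -
      have h: "(\<Sum>b<d. \<bar>\<mu> w b - 1 / real d\<bar>) \<le> 2 * ((real d - 1) / real d) * I w" using tv[OF w] by blast
      show ?thesis using h by linarith
    qed
    also have "\<dots> \<le> K * I w" using Knn tv[OF w] by (intro mult_right_mono) auto
    finally show "q w * ((1/2) * (\<Sum>b<d. \<bar>\<mu> w b - 1 / real d\<bar>)) \<le> q w * (K * I w)"
      using qnn[OF w] by (intro mult_left_mono) auto
  qed
  also have "\<dots> \<le> (\<Sum>w\<in>W. (Q * r w) * (K * I w))"
  proof (rule sum_mono)
    fix w assume w: "w \<in> W"
    have "K \<ge> 0" unfolding K_def using rdp by simp
    then show "q w * (K * I w) \<le> (Q * r w) * (K * I w)"
      using qr[OF w] tv[OF w] by (intro mult_right_mono) auto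
  qed
  also have "\<dots> = K * Q * (\<Sum>w\<in>W. r w * I w)"
    by (simp add: sum_distrib_left mult_ac)
  also have "\<dots> \<le> K * Q * bell_I N M d (observed W pw pxw P)"
  proof (rule mult_left_mono[OF obs])
    show "0 \<le> K * Q" unfolding K_def using rdp Q0 by simp
  qed
  finally show "(1/2) * (\<Sum>b<d. \<Sum>w\<in>W. \<bar>p_w_given_x W pw pxw w x * marginal N d (P w) x k b - (1 / real d) * p_w_given_x W pw pxw w x\<bar>)
    \<le> ((real (d - 1))^2 + 1) / (2 * real d) * Q_tilde N M W pxw x * bell_I N M d (observed W pw pxw P)"
    unfolding K_def Q_def .
qed

end
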